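(* Let $x_2>0$, $x_1\in(0,x_2)$ and $y_1,y_2,y_3\in\mathbb R$ with $0<y_3<y_1\le y_2$. Define $\rho_1,\rho_2:[0,x_2]\to\mathbb R$ by $\rho_1(x)=\frac{y_2-y_1}{x_1}x+y_1$ for $x\in[0,x_1]$, $\rho_1(x)=\frac{y_3-y_2}{x_2-x_1}(x-x_1)+y_2$ for $x\in(x_1,x_2]$, and $\rho_2(x)=\frac{y_3-y_1}{x_2}x+y_1$. Then $\mathcal N(\rho_2)\le\mathcal N(\rho_1)$, where $\mathcal N(\rho)=\int_0^{x_2}\frac{(\rho')^2}{\rho\sqrt{1+(\rho')^2}}\,dx$. *)

theory Defs
  imports "HOL-Analysis.Analysis"
begin

definition N_fun :: "(real \<Rightarrow> real) \<Rightarrow> real \<Rightarrow> real" where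
  "N_fun \<rho> L = integral {0..L}
     (\<lambda>x. (deriv \<rho> x)\<^sup>2 / (\<rho> x * sqrt (1 + (deriv \<rho> x)\<^sup>2)))"

end

theory Submission
  imports Defs
begin

lemma lin_int:
  fixes a c m b K :: real
  assumes "a \<le> c" "m \<noteq> 0" "\<And>x. x \<in> {a..c} \<Longrightarrow> m*x+b > 0"
  shows "((\<lambda>x. K/(m*x+b)) has_integral (K/m*(ln(m*c+b) - ln(m*a+b)))) {a..c}"
proof -
  have "((\<lambda>x. K/(m*x+b)) has_integral (K/m * ln(m*c+b) - K/m*ln(m*a+b))) {a..c}"
  proof (rule fundamental_theorem_of_calculus[OF assms(1)])
    fix x assume x: "x \<in> {a..c}"
    have pos: "m*x+b > 0" using assms(3)[OF x] .
    have "((\<lambda>x. K/m * ln(m*x+b)) has_real_derivative (K/m * (m / (m*x+b)))) (at x within {a..c})"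
      using pos by (auto intro!: derivative_eq_intros)
    moreover have "K/m * (m / (m*x+b)) = K/(m*x+b)" using assms(2) by simp
    ultimately show "((\<lambda>x. K/m * ln(m*x+b)) has_vector_derivative (K/(m*x+b))) (at x within {a..c})"
      by (simp only: has_real_derivative_iff_has_vector_derivative)
  qed
  thus ?thesis by (simp add: right_diff_distrib)
qed

lemma mono_h:
  fixes a b :: real
  assumes "0 \<le> a" "a \<le> b"
  shows "a / sqrt (1 + a\<^sup>2) \<le> b / sqrt (1 + b\<^sup>2)"
proof -
  have e: "\<And>t::real. 0 \<le> t \<Longrightarrow> t / sqrt (1 + t\<^sup>2) = sqrt (1 - 1/(1+t\<^sup>2))"
  proof -
    fix t :: real assume "0 \<le> t"
    have p: "1+t\<^sup>2 > 0" by (simp add: add_pos_nonneg)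
    have "1 - 1/(1+t\<^sup>2) = t\<^sup>2/(1+t\<^sup>2)" using p by (simp add: diff_divide_distrib[symmetric] divide_simps)
    thus "t / sqrt (1 + t\<^sup>2) = sqrt (1 - 1/(1+t\<^sup>2))"
      using \<open>0 \<le> t\<close> by (simp add: real_sqrt_divide)
  qed
  have "a\<^sup>2 \<le> b\<^sup>2" using assms by (simp add: power_mono)
  hence "1/(1+b\<^sup>2) \<le> 1/(1+a\<^sup>2)"
    by (intro divide_left_mono) (auto simp: add_pos_nonneg)
  thus ?thesis using e assms by simp
qed

theorem lemma2p3:
  fixes x1 x2 y1 y2 y3 :: real
    and \<rho>1 \<rho>2 :: "real \<Rightarrow> real"
  assumes "x2 > 0" and "0 < x1" and "x1 < x2"
    and "0 < y3" and "y3 < y1" and "y1 \<le> y2"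
    and "\<rho>1 = (\<lambda>x. if x \<le> x1 then (y2 - y1) / x1 * x + y1
                     else (y3 - y2) / (x2 - x1) * (x - x1) + y2)"
    and "\<rho>2 = (\<lambda>x. (y3 - y1) / x2 * x + y1)"
  shows "N_fun \<rho>2 x2 \<le> N_fun \<rho>1 x2"
proof -
  define s where "s = (y3 - y1) / x2"
  define m1 where "m1 = (y2 - y1) / x1"
  define m2 where "m2 = (y3 - y2) / (x2 - x1)"
  define b2 where "b2 = y2 - m2*x1"
  note r1 = assms(7) and r2 = assms(8)
  have sneg: "s < 0" using assms unfolding s_def by (simp add: divide_neg_pos)
  have m2neg: "m2 < 0" using assms unfolding m2_def by (simp add: divide_neg_pos)
  have m1nn: "m1 \<ge> 0" using assms unfolding m1_def by simp
  have sx2: "s*x2 + y1 = y3" using assms(1) unfolding s_def by simp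
  have m2x2: "m2*x2 + b2 = y3"
  proof -
    have "m2*x2 + b2 = m2*(x2-x1) + y2" unfolding b2_def by (simp add: algebra_simps)
    also have "m2*(x2-x1) = y3 - y2" unfolding m2_def using assms by simp
    finally show ?thesis by simp
  qed
  have m2x1: "m2*x1 + b2 = y2" unfolding b2_def by simp
  have d2: "\<And>x. deriv \<rho>2 x = s"
    unfolding r2 s_def by (rule DERIV_imp_deriv) (use assms(1) in \<open>auto intro!: derivative_eq_intros\<close>)
  define K where "K = s\<^sup>2 / sqrt (1 + s\<^sup>2)"
  have pos2: "\<And>x. x \<in> {0..x2} \<Longrightarrow> s*x+y1 > 0"
  proof -
    fix x assume x: "x \<in> {0..x2}"
    have "s*x2 \<le> s*x" using x sneg by (simp add: mult_left_mono_neg)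
    thus "s*x+y1 > 0" using sx2 assms by linarith
  qed
  have I2: "((\<lambda>x. K/(s*x+y1)) has_integral (K/s*(ln y3 - ln y1))) {0..x2}"
    using lin_int[of 0 x2 s y1 K] pos2 sneg assms sx2 by simp
  have N2: "N_fun \<rho>2 x2 = K/s*(ln y3 - ln y1)"
    unfolding N_fun_def d2
    using I2 by (intro integral_unique) (simp add: r2 s_def[symmetric] K_def field_simps)
  define F where "F = (\<lambda>x. (deriv \<rho>1 x)\<^sup>2 / (\<rho>1 x * sqrt (1 + (deriv \<rho>1 x)\<^sup>2)))"
  define K1 where "K1 = m1\<^sup>2 / sqrt (1 + m1\<^sup>2)"
  define K2 where "K2 = m2\<^sup>2 / sqrt (1 + m2\<^sup>2)"
  have F1: "F x = K1/(m1*x+y1)" if "x < x1" for x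
  proof -
    have "(\<rho>1 has_field_derivative m1) (at x)"
      by (rule has_field_derivative_transform_within_open[where f="\<lambda>x. m1*x+y1" and S="{..<x1}"])
         (use that assms(2) in \<open>auto intro!: derivative_eq_intros simp: r1 m1_def\<close>)
    hence "deriv \<rho>1 x = m1" by (rule DERIV_imp_deriv)
    thus ?thesis using that unfolding F_def K1_def by (simp add: r1 m1_def field_simps)
  qed
  have F2: "F x = K2/(m2*x+b2)" if "x > x1" for x
  proof -
    have "(\<rho>1 has_field_derivative m2) (at x)"
      by (rule has_field_derivative_transform_within_open[where f="\<lambda>x. m2*x+b2" and S="{x1<..}"])
         (use that in \<open>auto intro!: derivative_eq_intros simp: r1 m2_def[symmetric] b2_def algebra_simps\<close>)
    hence "deriv \<rho>1 x = m2" by (rule DERIV_imp_deriv)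
    moreover have "\<rho>1 x = m2*x+b2" using that by (simp add: r1 m2_def[symmetric] b2_def algebra_simps)
    ultimately show ?thesis unfolding F_def K2_def by (simp add: field_simps)
  qed
  have pos1: "m1*x+y1 > 0" if "x \<in> {0..x1}" for x
    using that m1nn assms by (smt (verit) atLeastAtMost_iff mult_nonneg_nonneg)
  have cont1: "continuous_on {0..x1} (\<lambda>x. K1/(m1*x+y1))"
    using pos1 by (intro continuous_intros) force
  define I1 where "I1 = integral {0..x1} (\<lambda>x. K1/(m1*x+y1))"
  have hI1: "((\<lambda>x. K1/(m1*x+y1)) has_integral I1) {0..x1}"
    unfolding I1_def using integrable_continuous_interval[OF cont1] by blast
  have I1nn: "I1 \<ge> 0"
  proof (rule has_integral_nonneg[OF hI1])
    fix x assume x: "x \<in> {0..x1}"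
    have "0 < sqrt (1 + m1\<^sup>2) * (m1 * x + y1)" using pos1[OF x] by (simp add: add_pos_nonneg)
    thus "0 \<le> K1/(m1*x+y1)" unfolding K1_def by simp
  qed
  have hF1: "(F has_integral I1) {0..x1}"
    by (rule has_integral_spike_finite[of "{x1}", OF _ _ hI1]) (auto intro!: F1)
  have pos3: "m2*x+b2 > 0" if "x \<in> {x1..x2}" for x
  proof -
    have "m2*x2 \<le> m2*x" using that m2neg by (simp add: mult_left_mono_neg)
    thus ?thesis using m2x2 assms by linarith
  qed
  have hI2: "((\<lambda>x. K2/(m2*x+b2)) has_integral (K2/m2*(ln y3 - ln y2))) {x1..x2}"
    using lin_int[of x1 x2 m2 b2 K2] pos3 m2neg assms m2x2 m2x1 by simp
  have hF2: "(F has_integral (K2/m2*(ln y3 - ln y2))) {x1..x2}"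
    by (rule has_integral_spike_finite[of "{x1}", OF _ _ hI2]) (auto intro!: F2)
  have N1: "N_fun \<rho>1 x2 = I1 + K2/m2*(ln y3 - ln y2)"
    unfolding N_fun_def F_def[symmetric]
    using has_integral_combine[OF less_imp_le[OF assms(2)] less_imp_le[OF assms(3)] hF1 hF2]
    by (rule integral_unique)
  have eK: "K/s = - ((-s) / sqrt (1 + (-s)\<^sup>2))" unfolding K_def using sneg
    by (simp add: power2_eq_square)
  have eK2: "K2/m2 = - ((-m2) / sqrt (1 + (-m2)\<^sup>2))" unfolding K2_def using m2neg
    by (simp add: power2_eq_square)
  have sm: "-s \<le> -m2"
  proof -
    have "(y1 - y3)/x2 \<le> (y2 - y3)/x2" using assms by (simp add: divide_right_mono)
    also have "\<dots> \<le> (y2 - y3)/(x2 - x1)" using assms by (intro divide_left_mono) auto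
    finally show ?thesis unfolding s_def m2_def by (simp add: minus_divide_left)
  qed
  have hm: "(-s) / sqrt (1 + (-s)\<^sup>2) \<le> (-m2) / sqrt (1 + (-m2)\<^sup>2)"
    using mono_h[OF _ sm] sneg by simp
  have l1: "0 \<le> ln y1 - ln y3" using assms by simp
  have l2: "ln y1 - ln y3 \<le> ln y2 - ln y3" using assms by simp
  have h0: "0 \<le> (-s) / sqrt (1 + (-s)\<^sup>2)" using sneg by (simp add: divide_nonpos_pos add_pos_nonneg)
  have "(-s) / sqrt (1 + (-s)\<^sup>2) * (ln y1 - ln y3) \<le> (-m2) / sqrt (1 + (-m2)\<^sup>2) * (ln y2 - ln y3)"
    using hm l1 l2 h0 by (meson mult_mono order_trans)
  moreover have "K/s*(ln y3 - ln y1) = (-s) / sqrt (1 + (-s)\<^sup>2) * (ln y1 - ln y3)"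
    unfolding eK by (metis minus_diff_eq mult_minus_left mult_minus_right)
  moreover have "K2/m2*(ln y3 - ln y2) = (-m2) / sqrt (1 + (-m2)\<^sup>2) * (ln y2 - ln y3)"
    unfolding eK2 by (metis minus_diff_eq mult_minus_left mult_minus_right)
  ultimately have "K/s*(ln y3 - ln y1) \<le> K2/m2*(ln y3 - ln y2)" by simp
  thus ?thesis using N1 N2 I1nn by linarith
qed

end
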